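(* Let $k\ge5$ and $x\in(1/4,1/2)$, and suppose the initial candidate distribution $F_0$ on $[0,1]$ is symmetric about $1/2$ and places probability mass $p$ at $x$ and mass $p$ at $1-x$. Then there exists $p^*_k<1/2$ such that if $p>p^*_k$, under the replicator dynamics with left–right tie-breaking the candidate distribution converges to point masses at $x$ and $1-x$ (i.e., the mass $F_{k,t}$ places at each of $x$ and $1-x$ tends to $1/2$ as $t\to\infty$). Moreover, one of the fixed points of the map $p\mapsto (2p)^k/2+k(1-2p)\left((2p)^{k-1}-2p^{k-1}\right)/2$ is such a $p^*_k$.
   Context: Voters form a continuum uniformly distributed on $[0,1]$, each voting for the nearest occupied point. The vote share allocated to an occupied point is the measure of voters whose nearest occupied point it is; it splits into a left part (voters to its left) and a right part (voters to its right). Left–right tie-breaking: if several candidates occupy the same point, one of them chosen uniformly at random receives the entire left part of that point's vote share and a different one chosen uniformly at random receives the entire right part; the others receive nothing. (A single candidate at a point receives both parts.) The plurality winner is the candidate with the largest vote share, ties broken uniformly at random. Replicator dynamics: given a probability distribution $F_0$ on $[0,1]$ and integer $k\ge2$, set $F_{k,0}=F_0$ and for $t\ge1$ let $F_{k,t}$ be the distribution of the position of the plurality winner among $k$ candidates whose positions are i.i.d. with distribution $F_{k,t-1}$. *)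

theory Defs
  imports "HOL-Probability.Probability"
begin

text \<open>A configuration of k candidates is a function pos :: nat \<Rightarrow> real, candidate i < k
  sitting at pos i.  Voters are uniform on [0,1].\<close>

definition occupied :: "nat \<Rightarrow> (nat \<Rightarrow> real) \<Rightarrow> real set" where
  "occupied k pos = pos ` {..<k}"

text \<open>Left part of the vote share of an occupied point p: voters in [0,1] to the left of p
  whose nearest occupied point is p.\<close>
definition left_part :: "nat \<Rightarrow> (nat \<Rightarrow> real) \<Rightarrow> real \<Rightarrow> real" where
  "left_part k pos p =
     (let L = {q \<in> occupied k pos. q < p} in if L = {} then p else (p - Max L) / 2)"

definition right_part :: "nat \<Rightarrow> (nat \<Rightarrow> real) \<Rightarrow> real \<Rightarrow> real" where
  "right_part k pos p =
     (let R = {q \<in> occupied k pos. p < q} in if R = {} then 1 - p else (Min R - p) / 2)"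

text \<open>Left-right tie-breaking at point p: an ordered pair (receiver of left part, receiver of
  right part); distinct candidates if several occupy p, the unique one otherwise.\<close>
definition tb_pairs :: "nat \<Rightarrow> (nat \<Rightarrow> real) \<Rightarrow> real \<Rightarrow> (nat \<times> nat) set" where
  "tb_pairs k pos p =
     {(a, b). a < k \<and> b < k \<and> pos a = p \<and> pos b = p \<and>
              (a \<noteq> b \<or> card {j. j < k \<and> pos j = p} = 1)}"

text \<open>All joint tie-breaking outcomes (uniformly distributed, independently over points).\<close>
definition tb_choices :: "nat \<Rightarrow> (nat \<Rightarrow> real) \<Rightarrow> (real \<Rightarrow> nat \<times> nat) set" where
  "tb_choices k pos = PiE (occupied k pos) (tb_pairs k pos)"

definition share :: "nat \<Rightarrow> (nat \<Rightarrow> real) \<Rightarrow> (real \<Rightarrow> nat \<times> nat) \<Rightarrow> nat \<Rightarrow> real" where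
  "share k pos \<sigma> i =
     (if fst (\<sigma> (pos i)) = i then left_part k pos (pos i) else 0) +
     (if snd (\<sigma> (pos i)) = i then right_part k pos (pos i) else 0)"

definition winners :: "nat \<Rightarrow> (nat \<Rightarrow> real) \<Rightarrow> (real \<Rightarrow> nat \<times> nat) \<Rightarrow> nat set" where
  "winners k pos \<sigma> = {i. i < k \<and> (\<forall>j<k. share k pos \<sigma> j \<le> share k pos \<sigma> i)}"

definition win_prob :: "nat \<Rightarrow> (nat \<Rightarrow> real) \<Rightarrow> nat \<Rightarrow> real" where
  "win_prob k pos i =
     (\<Sum>\<sigma>\<in>tb_choices k pos.
        (if i \<in> winners k pos \<sigma> then 1 / real (card (winners k pos \<sigma>)) else 0))
     / real (card (tb_choices k pos))"

definition winner_dist :: "nat \<Rightarrow> real measure \<Rightarrow> real measure" where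
  "winner_dist k F = measure_of UNIV (sets borel)
     (\<lambda>A. \<integral>\<^sup>+ pos. ennreal (\<Sum>i<k. win_prob k pos i * indicator A (pos i))
            \<partial>(PiM {..<k} (\<lambda>_. F)))"

definition replicator :: "nat \<Rightarrow> real measure \<Rightarrow> nat \<Rightarrow> real measure" where
  "replicator k F0 t = (winner_dist k ^^ t) F0"

definition fp_map :: "nat \<Rightarrow> real \<Rightarrow> real" where
  "fp_map k p = (2*p)^k / 2 + real k * (1 - 2*p) * ((2*p)^(k-1) - 2 * p^(k-1)) / 2"

end

theory Submission
  imports Defs
begin


lemma pow2_gt: "n \<ge> 5 \<Longrightarrow> 4 * real n < 2 ^ n"
proof (induction n rule: dec_induct)
  case base then show ?case by simp
next
  case (step n) then show ?case by simp
qed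

lemma fp_map_cont: "continuous_on S (fp_map k)"
  unfolding fp_map_def by (intro continuous_intros) auto

lemma fp_map_half: "fp_map k (1/2) = 1/2"
  unfolding fp_map_def by simp

lemma fp_map_zero: "k \<ge> 2 \<Longrightarrow> fp_map k 0 = 0"
  unfolding fp_map_def by (simp add: power_0_left)

lemma fp_map_deriv:
  assumes "k \<ge> 2"
  shows "DERIV (\<lambda>p. fp_map k p - p) (1/2) :> (4 * real k / 2^k - 1)"
proof -
  have "DERIV (\<lambda>p. fp_map k p - p) (1/2) :>
     (real k * (2*(1/2))^(k-1) * 2 / 2 +
      real k * ((-2) * ((2*(1/2))^(k-1) - 2 * (1/2)^(k-1)) + (1 - 2*(1/2)) * 
        (real (k-1) * (2*(1/2))^(k-1-1) * 2 - 2 * (real (k-1) * (1/2)^(k-1-1)))) / 2 - 1)"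
    unfolding fp_map_def
    by (rule derivative_eq_intros refl | simp | simp add: algebra_simps)+
  moreover have "(real k * (2*(1/2))^(k-1) * 2 / 2 +
      real k * ((-2) * ((2*(1/2))^(k-1) - 2 * (1/2)^(k-1)) + (1 - 2*(1/2)) * 
        (real (k-1) * (2*(1/2))^(k-1-1) * 2 - 2 * (real (k-1) * (1/2)^(k-1-1)))) / 2 - 1)
     = 4 * real k / 2^k - 1"
  proof -
    have k: "k = Suc (k - 1)" using assms by simp
    have "(1/2::real)^(k-1) = 2 / 2^k" 
      by (subst (2) k) (simp add: power_divide)
    moreover have "\<And>a::real. -(real k * (1 - 2*a) * 2) = real k * (4*a - 2)" by algebra
    ultimately show ?thesis by (simp add: field_simps)
  qed
  ultimately show ?thesis by simp
qed

lemma fp_exists: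
  assumes k: "k \<ge> 5"
  shows "\<exists>pstar. 0 \<le> pstar \<and> pstar < 1/2 \<and> fp_map k pstar = pstar \<and>
     (\<forall>p. pstar < p \<and> p < 1/2 \<longrightarrow> p < fp_map k p)"
proof -
  define h where "h p = fp_map k p - p" for p
  have hc: "continuous_on S h" for S unfolding h_def
    by (intro continuous_intros fp_map_cont)
  have "4 * real k / 2^k - 1 < 0" using pow2_gt[OF k] by (simp add: field_simps)
  from DERIV_neg_dec_left[OF fp_map_deriv this] k
  obtain d where d: "d > 0" "\<And>t. t > 0 \<Longrightarrow> t < d \<Longrightarrow> h (1/2) < h (1/2 - t)"
    unfolding h_def by auto
  have h12: "h (1/2) = 0" unfolding h_def by (simp add: fp_map_half)
  define e where "e = min d (1/4)"
  have e: "e > 0" "e \<le> d" "e \<le> 1/4" using d by (auto simp: e_def)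
  have hpos: "h p > 0" if "1/2 - e < p" "p < 1/2" for p
    using d(2)[of "1/2 - p"] that e h12 by auto
  define Z where "Z = {p \<in> {0..1/2 - e/2}. h p = 0}"
  have Zcl: "closed Z" unfolding Z_def
    by (rule continuous_closed_preimage_constant) (auto intro: hc)
  have Z0: "0 \<in> Z" using e k unfolding Z_def h_def by (simp add: fp_map_zero)
  have Zb: "bdd_above Z" unfolding Z_def by (rule bdd_aboveI[of _ "1/2 - e/2"]) auto
  define ps where "ps = Sup Z"
  have psZ: "ps \<in> Z" unfolding ps_def using closed_contains_Sup[OF _ Zb Zcl] Z0 by auto
  have ps_ge: "p \<le> ps" if "p \<in> Z" for p unfolding ps_def using cSup_upper[OF that Zb] .
  have main: "p < fp_map k p" if p: "ps < p" "p < 1/2" for p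
  proof (rule ccontr)
    assume "\<not> p < fp_map k p"
    then have hp: "h p \<le> 0" unfolding h_def by simp
    have pe: "p \<le> 1/2 - e" using hpos[of p] hp p by force
    have "h (1/2 - e/2) > 0" using hpos e by auto
    then obtain q where q: "p \<le> q" "q \<le> 1/2 - e/2" "h q = 0"
      using IVT'[of h p 0 "1/2 - e/2"] hp pe e hc by force
    have "0 \<le> ps" using ps_ge[OF Z0] .
    then have "q \<in> Z" using q p unfolding Z_def by auto
    then show False using ps_ge q p by force
  qed
  show ?thesis
    using psZ main e unfolding Z_def h_def ps_def[symmetric] by (intro exI[of _ ps]) auto
qed


definition lpf :: "nat \<Rightarrow> (nat \<Rightarrow> real) \<Rightarrow> nat \<Rightarrow> real" where
  "lpf k pos j = (if \<exists>l<k. pos l < pos j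
     then (pos j - Max ((\<lambda>l. if pos l < pos j then pos l else Min (pos ` {..<k})) ` {..<k})) / 2
     else pos j)"

definition rpf :: "nat \<Rightarrow> (nat \<Rightarrow> real) \<Rightarrow> nat \<Rightarrow> real" where
  "rpf k pos j = (if \<exists>l<k. pos j < pos l
     then (Min ((\<lambda>l. if pos j < pos l then pos l else Max (pos ` {..<k})) ` {..<k}) - pos j) / 2
     else 1 - pos j)"

lemma lp_eq:
  assumes j: "j < k"
  shows "left_part k pos (pos j) = lpf k pos j"
proof -
  define L where "L = {q \<in> pos ` {..<k}. q < pos j}"
  have fin: "finite L" unfolding L_def by auto
  have Le: "L = {} \<longleftrightarrow> \<not> (\<exists>l<k. pos l < pos j)" unfolding L_def by auto
  show ?thesis
  proof (cases "\<exists>l<k. pos l < pos j")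
    case False
    then show ?thesis using Le unfolding left_part_def lpf_def occupied_def L_def[symmetric] Let_def
      by auto
  next
    case True
    then have ne: "L \<noteq> {}" using Le by auto
    define m where "m = Max L"
    have mL: "m \<in> L" using Max_in[OF fin ne] m_def by simp
    then obtain l0 where l0: "l0 < k" "pos l0 = m" "m < pos j" unfolding L_def by auto
    have mge: "q \<le> m" if "q \<in> L" for q using Max_ge[OF fin that] m_def by simp
    have "Max ((\<lambda>l. if pos l < pos j then pos l else Min (pos ` {..<k})) ` {..<k}) = m"
    proof (rule Max_eqI)
      show "finite ((\<lambda>l. if pos l < pos j then pos l else Min (pos ` {..<k})) ` {..<k})" by simp
      show "m \<in> (\<lambda>l. if pos l < pos j then pos l else Min (pos ` {..<k})) ` {..<k}"
        using l0 by (intro image_eqI[of _ _ l0]) auto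
      fix y assume "y \<in> (\<lambda>l. if pos l < pos j then pos l else Min (pos ` {..<k})) ` {..<k}"
      then obtain l where l: "l < k" "y = (if pos l < pos j then pos l else Min (pos ` {..<k}))" by auto
      show "y \<le> m"
      proof (cases "pos l < pos j")
        case True then show ?thesis using l mge[of "pos l"] unfolding L_def by auto
      next
        case False
        have "Min (pos ` {..<k}) \<le> pos l0" using l0 by (intro Min_le) auto
        then show ?thesis using l False l0 by auto
      qed
    qed
    then show ?thesis using True ne unfolding left_part_def lpf_def occupied_def L_def[symmetric] Let_def m_def
      by simp
  qed
qed

lemma rp_eq:
  assumes j: "j < k"
  shows "right_part k pos (pos j) = rpf k pos j"
proof -
  define L where "L = {q \<in> pos ` {..<k}. pos j < q}"
  have fin: "finite L" unfolding L_def by auto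
  have Le: "L = {} \<longleftrightarrow> \<not> (\<exists>l<k. pos j < pos l)" unfolding L_def by auto
  show ?thesis
  proof (cases "\<exists>l<k. pos j < pos l")
    case False
    then show ?thesis using Le unfolding right_part_def rpf_def occupied_def L_def[symmetric] Let_def
      by auto
  next
    case True
    then have ne: "L \<noteq> {}" using Le by auto
    define m where "m = Min L"
    have mL: "m \<in> L" using Min_in[OF fin ne] m_def by simp
    then obtain l0 where l0: "l0 < k" "pos l0 = m" "pos j < m" unfolding L_def by auto
    have mge: "m \<le> q" if "q \<in> L" for q using Min_le[OF fin that] m_def by simp
    have "Min ((\<lambda>l. if pos j < pos l then pos l else Max (pos ` {..<k})) ` {..<k}) = m"
    proof (rule Min_eqI)
      show "finite ((\<lambda>l. if pos j < pos l then pos l else Max (pos ` {..<k})) ` {..<k})" by simp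
      show "m \<in> (\<lambda>l. if pos j < pos l then pos l else Max (pos ` {..<k})) ` {..<k}"
        using l0 by (intro image_eqI[of _ _ l0]) auto
      fix y assume "y \<in> (\<lambda>l. if pos j < pos l then pos l else Max (pos ` {..<k})) ` {..<k}"
      then obtain l where l: "l < k" "y = (if pos j < pos l then pos l else Max (pos ` {..<k}))" by auto
      show "m \<le> y"
      proof (cases "pos j < pos l")
        case True then show ?thesis using l mge[of "pos l"] unfolding L_def by auto
      next
        case False
        have "pos l0 \<le> Max (pos ` {..<k})" using l0 by (intro Max_ge) auto
        then show ?thesis using l False l0 by auto
      qed
    qed
    then show ?thesis using True ne unfolding right_part_def rpf_def occupied_def L_def[symmetric] Let_def m_def
      by simp
  qed
qed

abbreviation "PB k \<equiv> PiM {..<k} (\<lambda>_. borel :: real measure)"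

lemma lpf_meas: "j < k \<Longrightarrow> (\<lambda>pos. lpf k pos j) \<in> borel_measurable (PB k)"
  unfolding lpf_def
  apply (rule measurable_If)
    apply (rule borel_measurable_divide)
     apply (rule borel_measurable_diff)
      apply measurable
  done

lemma rpf_meas: "j < k \<Longrightarrow> (\<lambda>pos. rpf k pos j) \<in> borel_measurable (PB k)"
  unfolding rpf_def
  apply (rule measurable_If)
    apply (rule borel_measurable_divide)
     apply (rule borel_measurable_diff)
      apply (rule borel_measurable_Min, simp)
      apply measurable
  done


definition shf :: "nat \<Rightarrow> (nat \<Rightarrow> real) \<Rightarrow> (nat \<Rightarrow> nat \<times> nat) \<Rightarrow> nat \<Rightarrow> real" where
  "shf k pos \<tau> j = (if fst (\<tau> j) = j then lpf k pos j else 0) + (if snd (\<tau> j) = j then rpf k pos j else 0)"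

definition isw :: "nat \<Rightarrow> (nat \<Rightarrow> real) \<Rightarrow> (nat \<Rightarrow> nat \<times> nat) \<Rightarrow> nat \<Rightarrow> bool" where
  "isw k pos \<tau> i = (\<forall>j<k. shf k pos \<tau> j \<le> shf k pos \<tau> i)"

definition Hf :: "nat \<Rightarrow> (nat \<Rightarrow> real) \<Rightarrow> (nat \<Rightarrow> nat \<times> nat) \<Rightarrow> nat \<Rightarrow> real" where
  "Hf k pos \<tau> i = (if isw k pos \<tau> i then 1 / (\<Sum>l<k. if isw k pos \<tau> l then 1 else 0) else 0)"

definition validf :: "nat \<Rightarrow> (nat \<Rightarrow> real) \<Rightarrow> (nat \<Rightarrow> nat \<times> nat) \<Rightarrow> bool" where
  "validf k pos \<tau> = ((\<forall>i<k. \<exists>a<k. \<exists>b<k. \<tau> i = (a,b) \<and> pos a = pos i \<and> pos b = pos i \<and>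
        (a \<noteq> b \<or> (\<forall>l<k. pos l = pos i \<longrightarrow> l = i))) \<and>
     (\<forall>i<k. \<forall>j<k. pos i = pos j \<longrightarrow> \<tau> i = \<tau> j))"

definition SS :: "nat \<Rightarrow> (nat \<Rightarrow> nat \<times> nat) set" where
  "SS k = PiE {..<k} (\<lambda>_. {..<k} \<times> {..<k})"

definition wpf :: "nat \<Rightarrow> (nat \<Rightarrow> real) \<Rightarrow> nat \<Rightarrow> real" where
  "wpf k pos i = (\<Sum>\<tau>\<in>SS k. if validf k pos \<tau> then Hf k pos \<tau> i else 0) /
                 (\<Sum>\<tau>\<in>SS k. if validf k pos \<tau> then 1 else 0)"

lemma shf_meas: "j < k \<Longrightarrow> (\<lambda>pos. shf k pos \<tau> j) \<in> borel_measurable (PB k)"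
  unfolding shf_def using lpf_meas rpf_meas by measurable

lemma isw_meas: 
  assumes i: "i < k" shows "(\<lambda>pos. isw k pos \<tau> i) \<in> measurable (PB k) (count_space UNIV)"
proof -
  have eq: "(\<lambda>pos. isw k pos \<tau> i) = (\<lambda>pos. \<forall>j\<in>{..<k}. shf k pos \<tau> j \<le> shf k pos \<tau> i)"
    by (auto simp: isw_def)
  show ?thesis unfolding eq
  proof (rule pred_intros_finite(3), simp)
    fix j assume "j \<in> {..<k}"
    then show "Measurable.pred (PB k) (\<lambda>x. shf k x \<tau> j \<le> shf k x \<tau> i)"
      unfolding Measurable.pred_def using i by (intro borel_measurable_le shf_meas) auto
  qed
qed

lemma isw_set: "i < k \<Longrightarrow> {x \<in> space (PB k). isw k x \<tau> i} \<in> sets (PB k)"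
  using isw_meas[of i k \<tau>] unfolding Measurable.pred_def .

lemma Hf_meas: "i < k \<Longrightarrow> (\<lambda>pos. Hf k pos \<tau> i) \<in> borel_measurable (PB k)"
  unfolding Hf_def
  by (intro measurable_If borel_measurable_divide borel_measurable_sum isw_set measurable_const; simp)

lemma peq_meas: "a < k \<Longrightarrow> b < k \<Longrightarrow> (\<lambda>pos. pos a = pos b) \<in> measurable (PB k) (count_space UNIV)"
  unfolding Measurable.pred_def by (intro borel_measurable_eq measurable_component_singleton) auto

lemma pconst: "(\<lambda>pos. c) \<in> measurable M (count_space UNIV)"
  by simp

lemma validf_meas: "(\<lambda>pos. validf k pos \<tau>) \<in> measurable (PB k) (count_space UNIV)"
proof -
  have eq: "(\<lambda>pos. validf k pos \<tau>) = (\<lambda>pos. (\<forall>i\<in>{..<k}. \<exists>a\<in>{..<k}. \<exists>b\<in>{..<k}. \<tau> i = (a,b) \<and> pos a = pos i \<and> pos b = pos i \<and>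
        (a \<noteq> b \<or> (\<forall>l\<in>{..<k}. pos l = pos i \<longrightarrow> l = i))) \<and>
     (\<forall>i\<in>{..<k}. \<forall>j\<in>{..<k}. pos i = pos j \<longrightarrow> \<tau> i = \<tau> j))"
    unfolding validf_def Ball_def Bex_def lessThan_iff by (rule refl)
  show ?thesis unfolding eq
    apply (rule pred_intros_logic(3))
     apply (rule pred_intros_finite(3), simp)
     apply (rule pred_intros_finite(4), simp)
     apply (rule pred_intros_finite(4), simp)
     apply (rule pred_intros_conj1')
     apply (rule pred_intros_logic(3), rule peq_meas, simp, simp)
     apply (rule pred_intros_logic(3), rule peq_meas, simp, simp)
     apply (rule pred_intros_disj1')
     apply (rule pred_intros_finite(3), simp)
     apply (rule pred_intros_logic(4), rule peq_meas, simp, simp, rule pconst)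
    apply (rule pred_intros_finite(3), simp)
    apply (rule pred_intros_finite(3), simp)
    apply (rule pred_intros_logic(4), rule peq_meas, simp, simp, rule pconst)
    done
qed

lemma validf_set: "{x \<in> space (PB k). validf k x \<tau>} \<in> sets (PB k)"
  using validf_meas[of k \<tau>] unfolding Measurable.pred_def .

lemma wpf_meas: "i < k \<Longrightarrow> (\<lambda>pos. wpf k pos i) \<in> borel_measurable (PB k)"
  unfolding wpf_def
  by (intro measurable_If borel_measurable_divide borel_measurable_sum validf_set measurable_const Hf_meas; simp)


lemma card_eq1:
  fixes pos :: "nat \<Rightarrow> real" and k :: nat
  assumes "i < k" "pos i = p"
  shows "card {j. j<k \<and> pos j = p} = 1 \<longleftrightarrow> (\<forall>l<k. pos l = p \<longrightarrow> l = i)"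
proof
  assume c: "card {j. j<k \<and> pos j = p} = 1"
  then obtain x where x: "{j. j<k \<and> pos j = p} = {x}" by (rule card_1_singletonE)
  have "i \<in> {j. j<k \<and> pos j = p}" using assms by simp
  then have ix: "i = x" unfolding x by simp
  show "\<forall>l<k. pos l = p \<longrightarrow> l = i"
  proof (intro allI impI)
    fix l assume "l < k" "pos l = p"
    then have "l \<in> {j. j<k \<and> pos j = p}" by simp
    then show "l = i" unfolding x ix by simp
  qed
next
  assume a: "\<forall>l<k. pos l = p \<longrightarrow> l = i"
  have "{j. j<k \<and> pos j = p} = {i}"
  proof (intro equalityI subsetI)
    fix j assume "j \<in> {j. j<k \<and> pos j = p}" then show "j \<in> {i}" using a by simp
  next
    fix j assume "j \<in> {i}" then show "j \<in> {j. j<k \<and> pos j = p}" using assms by simp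
  qed
  then show "card {j. j<k \<and> pos j = p} = 1" by simp
qed

lemma tbp_iff:
  assumes "i < k"
  shows "(a,b) \<in> tb_pairs k pos (pos i) \<longleftrightarrow> a<k \<and> b<k \<and> pos a = pos i \<and> pos b = pos i \<and>
     (a \<noteq> b \<or> (\<forall>l<k. pos l = pos i \<longrightarrow> l = i))"
proof -
  have "(a,b) \<in> tb_pairs k pos (pos i) \<longleftrightarrow> a<k \<and> b<k \<and> pos a = pos i \<and> pos b = pos i \<and>
     (a \<noteq> b \<or> card {j. j<k \<and> pos j = pos i} = 1)" unfolding tb_pairs_def by simp
  then show ?thesis unfolding card_eq1[OF assms refl] .
qed

lemma tb_finite: "finite (tb_choices k pos)"
proof -
  have "tb_pairs k pos q \<subseteq> {..<k} \<times> {..<k}" for q by (auto simp: tb_pairs_def)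
  then have "tb_choices k pos \<subseteq> PiE (occupied k pos) (\<lambda>_. {..<k} \<times> {..<k})"
    unfolding tb_choices_def by (intro PiE_mono) auto
  moreover have "finite (PiE (occupied k pos) (\<lambda>_. {..<k} \<times> {..<k}))"
    by (intro finite_PiE) (auto simp: occupied_def)
  ultimately show ?thesis by (rule finite_subset)
qed

lemma tb_nonempty: "tb_choices k pos \<noteq> {}"
proof -
  have "tb_pairs k pos q \<noteq> {}" if "q \<in> occupied k pos" for q
  proof -
    from that obtain i where i: "i < k" "pos i = q" unfolding occupied_def by blast
    show ?thesis
    proof (cases "\<forall>l<k. pos l = pos i \<longrightarrow> l = i")
      case True
      then have "(i,i) \<in> tb_pairs k pos (pos i)" unfolding tbp_iff[OF i(1)] using i(1) by blast
      then show ?thesis using i(2) by blast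
    next
      case False
      then obtain l where "l < k" "pos l = pos i" "l \<noteq> i" by auto
      then have "(i,l) \<in> tb_pairs k pos (pos i)" unfolding tbp_iff[OF i(1)] using i(1) by blast
      then show ?thesis using i(2) by blast
    qed
  qed
  then show ?thesis unfolding tb_choices_def PiE_eq_empty_iff by blast
qed

lemma share_eq:
  assumes "j < k"
  shows "share k pos \<sigma> j = shf k pos (restrict (\<lambda>i. \<sigma> (pos i)) {..<k}) j"
  using assms unfolding share_def shf_def by (simp add: lp_eq rp_eq)

lemma winners_eq:
  "winners k pos \<sigma> = {i. i < k \<and> isw k pos (restrict (\<lambda>i. \<sigma> (pos i)) {..<k}) i}"
  unfolding winners_def isw_def by (auto simp: share_eq)

lemma card_filter_sum: "real (card {i. i < (k::nat) \<and> P i}) = (\<Sum>l<k. if P l then 1 else 0)"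
proof -
  have "{i. i < k \<and> P i} = {l \<in> {..<k}. P l}" by auto
  then have "real (card {i. i < k \<and> P i}) = (\<Sum>l\<in>{l \<in> {..<k}. P l}. 1)" by simp
  also have "\<dots> = (\<Sum>l<k. if P l then 1 else 0)" by (rule sum.inter_filter) auto
  finally show ?thesis .
qed

lemma phi_bij: "bij_betw (\<lambda>\<sigma>. restrict (\<lambda>i. \<sigma> (pos i)) {..<k}) (tb_choices k pos) {\<tau> \<in> SS k. validf k pos \<tau>}"
proof (rule bij_betw_byWitness[where f' = "\<lambda>\<tau>. (\<lambda>q \<in> occupied k pos. \<tau> (SOME i. i<k \<and> pos i = q))"])
  show "\<forall>\<sigma>\<in>tb_choices k pos. (\<lambda>q \<in> occupied k pos. (restrict (\<lambda>i. \<sigma> (pos i)) {..<k}) (SOME i. i<k \<and> pos i = q)) = \<sigma>"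
  proof
    fix \<sigma> assume s: "\<sigma> \<in> tb_choices k pos"
    show "(\<lambda>q \<in> occupied k pos. (restrict (\<lambda>i. \<sigma> (pos i)) {..<k}) (SOME i. i<k \<and> pos i = q)) = \<sigma>"
    proof
      fix q show "(\<lambda>q \<in> occupied k pos. (restrict (\<lambda>i. \<sigma> (pos i)) {..<k}) (SOME i. i<k \<and> pos i = q)) q = \<sigma> q"
      proof (cases "q \<in> occupied k pos")
        case True
        then have "\<exists>i. i<k \<and> pos i = q" by (auto simp: occupied_def)
        then have "(SOME i. i<k \<and> pos i = q) < k \<and> pos (SOME i. i<k \<and> pos i = q) = q" by (rule someI_ex)
        then show ?thesis using True by simp
      next
        case False then show ?thesis using s unfolding tb_choices_def by (simp add: PiE_def extensional_def)
      qed
    qed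
  qed
  show "\<forall>\<tau>\<in>{\<tau> \<in> SS k. validf k pos \<tau>}. restrict (\<lambda>i. (\<lambda>q \<in> occupied k pos. \<tau> (SOME i. i<k \<and> pos i = q)) (pos i)) {..<k} = \<tau>"
  proof
    fix \<tau> assume t: "\<tau> \<in> {\<tau> \<in> SS k. validf k pos \<tau>}"
    show "restrict (\<lambda>i. (\<lambda>q \<in> occupied k pos. \<tau> (SOME i. i<k \<and> pos i = q)) (pos i)) {..<k} = \<tau>"
    proof
      fix i show "restrict (\<lambda>i. (\<lambda>q \<in> occupied k pos. \<tau> (SOME i. i<k \<and> pos i = q)) (pos i)) {..<k} i = \<tau> i"
      proof (cases "i < k")
        case True
        have "\<exists>l. l<k \<and> pos l = pos i" using True by auto
        then have l: "(SOME l. l<k \<and> pos l = pos i) < k \<and> pos (SOME l. l<k \<and> pos l = pos i) = pos i" by (rule someI_ex)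
        have V: "\<forall>i<k. \<forall>j<k. pos i = pos j \<longrightarrow> \<tau> i = \<tau> j" using t unfolding validf_def by blast
        have "\<tau> (SOME l. l<k \<and> pos l = pos i) = \<tau> i" using V l True by blast
        then show ?thesis using True by (simp add: occupied_def)
      next
        case False then show ?thesis using t unfolding SS_def by (simp add: PiE_def extensional_def)
      qed
    qed
  qed
  show "(\<lambda>\<sigma>. restrict (\<lambda>i. \<sigma> (pos i)) {..<k}) ` tb_choices k pos \<subseteq> {\<tau> \<in> SS k. validf k pos \<tau>}"
  proof
    fix \<tau> assume "\<tau> \<in> (\<lambda>\<sigma>. restrict (\<lambda>i. \<sigma> (pos i)) {..<k}) ` tb_choices k pos"
    then obtain \<sigma> where s: "\<sigma> \<in> tb_choices k pos" and t: "\<tau> = restrict (\<lambda>i. \<sigma> (pos i)) {..<k}" by auto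
    have m: "\<sigma> (pos i) \<in> tb_pairs k pos (pos i)" if "i < k" for i
      by (rule PiE_mem[OF s[unfolded tb_choices_def]]) (use that in \<open>auto simp: occupied_def\<close>)
    have "\<tau> \<in> SS k" unfolding SS_def t
    proof (rule restrict_PiE_iff[THEN iffD2], intro ballI)
      fix i assume "i \<in> {..<k}"
      then show "\<sigma> (pos i) \<in> {..<k} \<times> {..<k}" using m[of i] unfolding tb_pairs_def by auto
    qed
    moreover have "validf k pos \<tau>"
      unfolding validf_def
    proof (intro conjI allI impI)
      fix i assume i: "i < k"
      obtain a b where ab: "\<sigma> (pos i) = (a,b)" by fastforce
      have "(a,b) \<in> tb_pairs k pos (pos i)" using m[OF i] ab by simp
      then have F: "a<k \<and> b<k \<and> pos a = pos i \<and> pos b = pos i \<and> (a \<noteq> b \<or> (\<forall>l<k. pos l = pos i \<longrightarrow> l = i))"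
        unfolding tbp_iff[OF i] .
      have "\<tau> i = (a,b)" using t ab i by simp
      then show "\<exists>a<k. \<exists>b<k. \<tau> i = (a, b) \<and> pos a = pos i \<and> pos b = pos i \<and> (a \<noteq> b \<or> (\<forall>l<k. pos l = pos i \<longrightarrow> l = i))"
        using F by blast
    next
      fix i j assume "i < k" "j < k" "pos i = pos j"
      then show "\<tau> i = \<tau> j" using t by simp
    qed
    ultimately show "\<tau> \<in> {\<tau> \<in> SS k. validf k pos \<tau>}" by simp
  qed
  show "(\<lambda>\<tau>. (\<lambda>q \<in> occupied k pos. \<tau> (SOME i. i<k \<and> pos i = q))) ` {\<tau> \<in> SS k. validf k pos \<tau>} \<subseteq> tb_choices k pos"
  proof
    fix \<sigma> assume "\<sigma> \<in> (\<lambda>\<tau>. (\<lambda>q \<in> occupied k pos. \<tau> (SOME i. i<k \<and> pos i = q))) ` {\<tau> \<in> SS k. validf k pos \<tau>}"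
    then obtain \<tau> where t: "\<tau> \<in> SS k" "validf k pos \<tau>" and s: "\<sigma> = (\<lambda>q \<in> occupied k pos. \<tau> (SOME i. i<k \<and> pos i = q))"
      by auto
    show "\<sigma> \<in> tb_choices k pos" unfolding tb_choices_def s
    proof (rule restrict_PiE_iff[THEN iffD2], intro ballI)
      fix q assume q: "q \<in> occupied k pos"
      then have "\<exists>i. i<k \<and> pos i = q" by (auto simp: occupied_def)
      then have l: "(SOME i. i<k \<and> pos i = q) < k \<and> pos (SOME i. i<k \<and> pos i = q) = q" by (rule someI_ex)
      define l where "l = (SOME i. i<k \<and> pos i = q)"
      have l': "l < k" "pos l = q" using l l_def by auto
      obtain a b where ab: "\<tau> l = (a,b)" by fastforce
      from t(2) l'(1) obtain a' b' where ab': "a'<k" "b'<k" "\<tau> l = (a',b')" "pos a' = pos l" "pos b' = pos l"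
         "a' \<noteq> b' \<or> (\<forall>j<k. pos j = pos l \<longrightarrow> j = l)"
        unfolding validf_def by blast
      have "a' = a" "b' = b" using ab ab'(3) by auto
      then have "(a,b) \<in> tb_pairs k pos (pos l)"
        unfolding tbp_iff[OF l'(1)] using ab' by blast
      then show "\<tau> (SOME i. i<k \<and> pos i = q) \<in> tb_pairs k pos q" using ab l' l_def by simp
    qed
  qed
qed

lemma win_prob_eq:
  assumes i: "i < k"
  shows "win_prob k pos i = wpf k pos i"
proof -
  let ?phi = "\<lambda>\<sigma>. restrict (\<lambda>i. \<sigma> (pos i)) {..<k}"
  let ?T = "{\<tau> \<in> SS k. validf k pos \<tau>}"
  have fS: "finite (SS k)" unfolding SS_def by (intro finite_PiE) auto
  have h: "(if i \<in> winners k pos \<sigma> then 1 / real (card (winners k pos \<sigma>)) else 0) = Hf k pos (?phi \<sigma>) i" for \<sigma>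
    unfolding winners_eq Hf_def using i by (simp add: card_filter_sum)
  have "(\<Sum>\<sigma>\<in>tb_choices k pos. (if i \<in> winners k pos \<sigma> then 1 / real (card (winners k pos \<sigma>)) else 0))
      = (\<Sum>\<sigma>\<in>tb_choices k pos. Hf k pos (?phi \<sigma>) i)" by (simp add: h)
  also have "\<dots> = (\<Sum>\<tau>\<in>?T. Hf k pos \<tau> i)"
    using sum.reindex_bij_betw[OF phi_bij, of "\<lambda>\<tau>. Hf k pos \<tau> i"] by simp
  also have "\<dots> = (\<Sum>\<tau>\<in>SS k. if validf k pos \<tau> then Hf k pos \<tau> i else 0)"
    using fS by (simp add: sum.inter_filter)
  finally have num: "(\<Sum>\<sigma>\<in>tb_choices k pos. (if i \<in> winners k pos \<sigma> then 1 / real (card (winners k pos \<sigma>)) else 0))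
      = (\<Sum>\<tau>\<in>SS k. if validf k pos \<tau> then Hf k pos \<tau> i else 0)" .
  have "real (card (tb_choices k pos)) = real (card ?T)" using bij_betw_same_card[OF phi_bij] by simp
  also have "\<dots> = (\<Sum>\<tau>\<in>?T. 1)" by simp
  also have "\<dots> = (\<Sum>\<tau>\<in>SS k. if validf k pos \<tau> then 1 else 0)"
    using fS by (rule sum.inter_filter)
  finally have den: "real (card (tb_choices k pos)) = (\<Sum>\<tau>\<in>SS k. if validf k pos \<tau> then 1 else 0)" .
  show ?thesis unfolding win_prob_def wpf_def num den ..
qed


lemma winners_sub: "winners k pos \<sigma> \<subseteq> {..<k}"
  unfolding winners_def by auto

lemma winners_nonempty:
  assumes "0 < k" shows "winners k pos \<sigma> \<noteq> {}"
proof -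
  let ?S = "share k pos \<sigma> ` {..<k}"
  have fin: "finite ?S" and ne: "?S \<noteq> {}" using assms by auto
  obtain i where i: "i < k" "share k pos \<sigma> i = Max ?S" using Max_in[OF fin ne] by auto
  have "\<forall>j<k. share k pos \<sigma> j \<le> share k pos \<sigma> i" using i(2) fin by auto
  then have "i \<in> winners k pos \<sigma>" using i(1) unfolding winners_def by auto
  then show ?thesis by auto
qed

lemma win_prob_nonneg: "0 \<le> win_prob k pos i"
  unfolding win_prob_def by (intro divide_nonneg_nonneg sum_nonneg) auto

lemma win_prob_ge_k: "k \<le> i \<Longrightarrow> win_prob k pos i = 0"
  unfolding win_prob_def winners_def by simp

lemma win_prob_sum:
  assumes "0 < k" shows "(\<Sum>i<k. win_prob k pos i) = 1"
proof -
  have inner: "(\<Sum>i<k. (if i \<in> winners k pos \<sigma> then 1 / real (card (winners k pos \<sigma>)) else 0)) = 1" for \<sigma>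
  proof -
    let ?W = "winners k pos \<sigma>"
    have finW: "finite ?W" by (rule finite_subset[OF winners_sub]) simp
    have "(\<Sum>i<k. (if i \<in> ?W then 1 / real (card ?W) else 0)) = (\<Sum>i\<in>{..<k} \<inter> ?W. 1 / real (card ?W))"
      by (rule sum.inter_restrict[symmetric]) simp
    also have "{..<k} \<inter> ?W = ?W" using winners_sub by blast
    also have "(\<Sum>i\<in>?W. 1 / real (card ?W)) = 1"
    proof -
      have "card ?W \<noteq> 0" using winners_nonempty[OF assms] finW by simp
      then show ?thesis by simp
    qed
    finally show ?thesis .
  qed
  have "(\<Sum>i<k. win_prob k pos i) =
    (\<Sum>\<sigma>\<in>tb_choices k pos. \<Sum>i<k. (if i \<in> winners k pos \<sigma> then 1 / real (card (winners k pos \<sigma>)) else 0))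
      / real (card (tb_choices k pos))"
    unfolding win_prob_def sum_divide_distrib[symmetric] by (subst sum.swap) (rule refl)
  also have "\<dots> = 1"
  proof -
    have c: "card (tb_choices k pos) \<noteq> 0" using tb_finite[of k pos] tb_nonempty[of k pos] by simp
    have "(\<Sum>\<sigma>\<in>tb_choices k pos. \<Sum>i<k. (if i \<in> winners k pos \<sigma> then 1 / real (card (winners k pos \<sigma>)) else 0))
       = (\<Sum>\<sigma>\<in>tb_choices k pos. 1)" by (rule sum.cong[OF refl inner])
    then show ?thesis using c by simp
  qed
  finally show ?thesis .
qed

lemma win_prob_cong:
  assumes eq: "\<And>j. j < k \<Longrightarrow> pos j = pos' j"
  shows "win_prob k pos i = win_prob k pos' i"
proof -
  have occ: "occupied k pos = occupied k pos'" unfolding occupied_def using eq by auto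
  have cs: "{j. j<k \<and> pos j = p} = {j. j<k \<and> pos' j = p}" for p using eq by auto
  have tbp: "tb_pairs k pos p = tb_pairs k pos' p" for p
    unfolding tb_pairs_def cs using eq by auto
  have lp: "left_part k pos = left_part k pos'" unfolding left_part_def occ ..
  have rp: "right_part k pos = right_part k pos'" unfolding right_part_def occ ..
  have sh: "share k pos \<sigma> j = share k pos' \<sigma> j" if "j < k" for \<sigma> j
    unfolding share_def lp rp using eq[OF that] by simp
  have w: "winners k pos \<sigma> = winners k pos' \<sigma>" for \<sigma>
    unfolding winners_def using sh by auto
  have tb: "tb_choices k pos = tb_choices k pos'" unfolding tb_choices_def occ tbp ..
  show ?thesis unfolding win_prob_def tb w ..
qed


lemma occ_refl: "occupied k (\<lambda>j. 1 - pos j) = (\<lambda>q. 1 - q) ` occupied k pos"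
  unfolding occupied_def by (simp add: image_image)

lemma Max_refl:
  fixes R :: "real set"
  assumes "finite R" "R \<noteq> {}"
  shows "Max ((\<lambda>q. 1 - q) ` R) = 1 - Min R"
proof (rule Max_eqI)
  show "finite ((\<lambda>q. 1 - q) ` R)" using assms by simp
  show "1 - Min R \<in> (\<lambda>q. 1 - q) ` R" using Min_in[OF assms] by simp
  fix y assume "y \<in> (\<lambda>q. 1 - q) ` R"
  then obtain q where "q \<in> R" "y = 1 - q" by auto
  then show "y \<le> 1 - Min R" using Min_le[OF assms(1)] by force
qed

lemma Min_refl:
  fixes R :: "real set"
  assumes "finite R" "R \<noteq> {}"
  shows "Min ((\<lambda>q. 1 - q) ` R) = 1 - Max R"
proof (rule Min_eqI)
  show "finite ((\<lambda>q. 1 - q) ` R)" using assms by simp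
  show "1 - Max R \<in> (\<lambda>q. 1 - q) ` R" using Max_in[OF assms] by simp
  fix y assume "y \<in> (\<lambda>q. 1 - q) ` R"
  then obtain q where "q \<in> R" "y = 1 - q" by auto
  then show "1 - Max R \<le> y" using Max_ge[OF assms(1)] by force
qed

lemma lp_refl: "left_part k (\<lambda>j. 1 - pos j) (1 - p) = right_part k pos p"
proof -
  define R where "R = {q \<in> occupied k pos. p < q}"
  have eq: "{q \<in> occupied k (\<lambda>j. 1 - pos j). q < 1 - p} = (\<lambda>q. 1 - q) ` R"
    unfolding R_def occ_refl by auto
  have fin: "finite R" unfolding R_def occupied_def by simp
  show ?thesis
    unfolding left_part_def right_part_def Let_def eq R_def[symmetric]
    using Max_refl[OF fin] by simp
qed

lemma rp_refl: "right_part k (\<lambda>j. 1 - pos j) (1 - p) = left_part k pos p"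
proof -
  define R where "R = {q \<in> occupied k pos. q < p}"
  have eq: "{q \<in> occupied k (\<lambda>j. 1 - pos j). 1 - p < q} = (\<lambda>q. 1 - q) ` R"
    unfolding R_def occ_refl by auto
  have fin: "finite R" unfolding R_def occupied_def by simp
  show ?thesis
    unfolding left_part_def right_part_def Let_def eq R_def[symmetric]
    using Min_refl[OF fin] by simp
qed

lemma tbp_refl: "(a,b) \<in> tb_pairs k (\<lambda>j. 1 - pos j) q \<longleftrightarrow> (b,a) \<in> tb_pairs k pos (1 - q)"
proof -
  have cs: "{j. j<k \<and> 1 - pos j = q} = {j. j<k \<and> pos j = 1 - q}" by auto
  show ?thesis unfolding tb_pairs_def cs by auto
qed

lemma win_prob_refl: "win_prob k (\<lambda>j. 1 - pos j) i = win_prob k pos i"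
proof -
  let ?pos' = "\<lambda>j. 1 - pos j"
  let ?psi = "\<lambda>\<sigma>. (\<lambda>q \<in> occupied k ?pos'. prod.swap (\<sigma> (1 - q)))"
  let ?psi' = "\<lambda>\<sigma>. (\<lambda>q \<in> occupied k pos. prod.swap (\<sigma> (1 - q)))"
  have bij: "bij_betw ?psi (tb_choices k pos) (tb_choices k ?pos')"
  proof (rule bij_betw_byWitness[where f' = ?psi'])
    show "\<forall>\<sigma>\<in>tb_choices k pos. ?psi' (?psi \<sigma>) = \<sigma>"
    proof
      fix \<sigma> assume s: "\<sigma> \<in> tb_choices k pos"
      show "?psi' (?psi \<sigma>) = \<sigma>"
      proof
        fix q show "?psi' (?psi \<sigma>) q = \<sigma> q"
        proof (cases "q \<in> occupied k pos")
          case True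
          then have "1 - q \<in> occupied k ?pos'" unfolding occ_refl by auto
          then show ?thesis using True by simp
        next
          case False then show ?thesis using s unfolding tb_choices_def by (simp add: PiE_def extensional_def)
        qed
      qed
    qed
    show "\<forall>\<sigma>\<in>tb_choices k ?pos'. ?psi (?psi' \<sigma>) = \<sigma>"
    proof
      fix \<sigma> assume s: "\<sigma> \<in> tb_choices k ?pos'"
      show "?psi (?psi' \<sigma>) = \<sigma>"
      proof
        fix q show "?psi (?psi' \<sigma>) q = \<sigma> q"
        proof (cases "q \<in> occupied k ?pos'")
          case True
          then have "1 - q \<in> occupied k pos" unfolding occ_refl by auto
          then show ?thesis using True by simp
        next
          case False then show ?thesis using s unfolding tb_choices_def by (simp add: PiE_def extensional_def)
        qed
      qed
    qed
    show "?psi ` tb_choices k pos \<subseteq> tb_choices k ?pos'"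
    proof
      fix \<tau> assume "\<tau> \<in> ?psi ` tb_choices k pos"
      then obtain \<sigma> where s: "\<sigma> \<in> tb_choices k pos" and t: "\<tau> = ?psi \<sigma>" by blast
      show "\<tau> \<in> tb_choices k ?pos'" unfolding t tb_choices_def
      proof (rule restrict_PiE_iff[THEN iffD2], intro ballI)
        fix q assume q: "q \<in> occupied k ?pos'"
        then have q': "1 - q \<in> occupied k pos" unfolding occ_refl by auto
        obtain a b where ab: "\<sigma> (1 - q) = (a,b)" by fastforce
        have "(a,b) \<in> tb_pairs k pos (1 - q)" using PiE_mem[OF s[unfolded tb_choices_def] q'] ab by simp
        then have "(b,a) \<in> tb_pairs k ?pos' q" unfolding tbp_refl by simp
        then show "prod.swap (\<sigma> (1 - q)) \<in> tb_pairs k ?pos' q" using ab by simp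
      qed
    qed
    show "?psi' ` tb_choices k ?pos' \<subseteq> tb_choices k pos"
    proof
      fix \<tau> assume "\<tau> \<in> ?psi' ` tb_choices k ?pos'"
      then obtain \<sigma> where s: "\<sigma> \<in> tb_choices k ?pos'" and t: "\<tau> = ?psi' \<sigma>" by blast
      show "\<tau> \<in> tb_choices k pos" unfolding t tb_choices_def
      proof (rule restrict_PiE_iff[THEN iffD2], intro ballI)
        fix q assume q: "q \<in> occupied k pos"
        then have q': "1 - q \<in> occupied k ?pos'" unfolding occ_refl by auto
        obtain a b where ab: "\<sigma> (1 - q) = (a,b)" by fastforce
        have "(a,b) \<in> tb_pairs k ?pos' (1 - q)" using PiE_mem[OF s[unfolded tb_choices_def] q'] ab by simp
        then have "(b,a) \<in> tb_pairs k pos q" unfolding tbp_refl by simp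
        then show "prod.swap (\<sigma> (1 - q)) \<in> tb_pairs k pos q" using ab by simp
      qed
    qed
  qed
  have sh: "share k ?pos' (?psi \<sigma>) j = share k pos \<sigma> j" if "j < k" for \<sigma> j
  proof -
    have "?pos' j \<in> occupied k ?pos'" using that unfolding occupied_def by auto
    then have "?psi \<sigma> (?pos' j) = prod.swap (\<sigma> (pos j))" by simp
    then show ?thesis unfolding share_def using lp_refl[of k pos "pos j"] rp_refl[of k pos "pos j"]
      by (simp add: prod.swap_def)
  qed
  have w: "winners k ?pos' (?psi \<sigma>) = winners k pos \<sigma>" for \<sigma>
    unfolding winners_def using sh by auto
  have "win_prob k ?pos' i = (\<Sum>\<sigma>\<in>tb_choices k pos.
        (if i \<in> winners k ?pos' (?psi \<sigma>) then 1 / real (card (winners k ?pos' (?psi \<sigma>))) else 0))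
     / real (card (tb_choices k ?pos'))"
    unfolding win_prob_def
    using sum.reindex_bij_betw[OF bij, of "\<lambda>\<sigma>. (if i \<in> winners k ?pos' \<sigma> then 1 / real (card (winners k ?pos' \<sigma>)) else 0)"]
    by simp
  also have "\<dots> = win_prob k pos i"
    unfolding win_prob_def w bij_betw_same_card[OF bij, symmetric] ..
  finally show ?thesis .
qed


abbreviation "PF k F \<equiv> PiM {..<k} (\<lambda>_. F :: real measure)"

definition refl_pos :: "nat \<Rightarrow> (nat \<Rightarrow> real) \<Rightarrow> (nat \<Rightarrow> real)" where
  "refl_pos k pos = (\<lambda>j\<in>{..<k}. 1 - pos j)"

definition gA :: "nat \<Rightarrow> real set \<Rightarrow> (nat \<Rightarrow> real) \<Rightarrow> ennreal" where
  "gA k A pos = ennreal (\<Sum>i<k. win_prob k pos i * indicator A (pos i))"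

lemma wp_meas_F:
  assumes sF: "sets F = sets borel" and i: "i < k"
  shows "(\<lambda>pos. win_prob k pos i) \<in> borel_measurable (PF k F)"
proof -
  have sP: "sets (PF k F) = sets (PB k)" by (rule sets_PiM_cong) (auto simp: sF)
  have "(\<lambda>pos. wpf k pos i) \<in> borel_measurable (PB k)" by (rule wpf_meas[OF i])
  then have "(\<lambda>pos. wpf k pos i) \<in> borel_measurable (PF k F)"
    using measurable_cong_sets[OF sP refl] by blast
  moreover have "(\<lambda>pos. win_prob k pos i) = (\<lambda>pos. wpf k pos i)" using win_prob_eq[OF i] by auto
  ultimately show ?thesis by simp
qed

lemma gA_meas:
  assumes sF: "sets F = sets borel" and A: "A \<in> sets borel"
  shows "gA k A \<in> borel_measurable (PF k F)"
proof -
  have "(\<lambda>pos. \<Sum>i<k. win_prob k pos i * indicator A (pos i)) \<in> borel_measurable (PF k F)"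
  proof (rule borel_measurable_sum)
    fix i assume i: "i \<in> {..<k}"
    have c: "(\<lambda>pos. pos i) \<in> measurable (PF k F) F" using i by (intro measurable_component_singleton) auto
    have "(\<lambda>pos. indicator A (pos i) :: real) \<in> borel_measurable (PF k F)"
      using measurable_comp[OF c, of "indicator A" borel] A sF by (simp add: comp_def)
    then show "(\<lambda>pos. win_prob k pos i * indicator A (pos i)) \<in> borel_measurable (PF k F)"
      using wp_meas_F[OF sF, of i k] i by (intro borel_measurable_times) auto
  qed
  then show ?thesis unfolding gA_def by (rule measurable_compose[OF _ measurable_ennreal])
qed

lemma gA_expand:
  "gA k A pos = (\<Sum>i<k. ennreal (win_prob k pos i) * indicator A (pos i))"
proof -
  have "gA k A pos = (\<Sum>i<k. ennreal (win_prob k pos i * indicator A (pos i)))"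
    unfolding gA_def by (rule sum_ennreal[symmetric]) (simp add: win_prob_nonneg)
  also have "\<dots> = (\<Sum>i<k. ennreal (win_prob k pos i) * indicator A (pos i))"
    by (rule sum.cong) (auto simp: indicator_def)
  finally show ?thesis .
qed

lemma gA_suminf:
  assumes "disjoint_family A"
  shows "(\<Sum>n. gA k (A n) pos) = gA k (\<Union>n. A n) pos"
proof -
  have "(\<Sum>n. gA k (A n) pos) = (\<Sum>n. \<Sum>i<k. ennreal (win_prob k pos i) * indicator (A n) (pos i))"
    by (simp add: gA_expand)
  also have "\<dots> = (\<Sum>i<k. \<Sum>n. ennreal (win_prob k pos i) * indicator (A n) (pos i))"
    by (rule suminf_sum) auto
  also have "\<dots> = (\<Sum>i<k. ennreal (win_prob k pos i) * indicator (\<Union>n. A n) (pos i))"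
    by (simp add: suminf_indicator[OF assms])
  finally show ?thesis by (simp add: gA_expand)
qed

lemma wd_emeasure:
  assumes sF: "sets F = sets borel" and A: "A \<in> sets borel"
  shows "emeasure (winner_dist k F) A = (\<integral>\<^sup>+pos. gA k A pos \<partial>(PF k F))"
proof -
  let ?mu = "\<lambda>A. (\<integral>\<^sup>+pos. gA k A pos \<partial>(PF k F))"
  have wd: "winner_dist k F = measure_of UNIV (sets borel) ?mu"
    unfolding winner_dist_def gA_def ..
  have sa: "sigma_algebra UNIV (sets borel)"
    using sets.sigma_algebra_axioms[of borel] by simp
  have pos: "positive (sets borel) ?mu" unfolding positive_def gA_def by simp
  have ca: "countably_additive (sets borel) ?mu"
  proof (rule countably_additiveI)
    fix B :: "nat \<Rightarrow> real set" assume B: "range B \<subseteq> sets borel" "disjoint_family B"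
    have "(\<Sum>n. ?mu (B n)) = (\<integral>\<^sup>+pos. (\<Sum>n. gA k (B n) pos) \<partial>(PF k F))"
      by (rule nn_integral_suminf[symmetric]) (use B sF in \<open>auto intro: gA_meas\<close>)
    also have "\<dots> = ?mu (\<Union>n. B n)" by (simp add: gA_suminf[OF B(2)])
    finally show "(\<Sum>n. ?mu (B n)) = ?mu (\<Union>n. B n)" .
  qed
  show ?thesis unfolding wd by (rule emeasure_measure_of_sigma[OF sa pos ca A])
qed

lemma wd_sets: "sets (winner_dist k F) = sets borel"
proof -
  have "sets (winner_dist k F) = sigma_sets UNIV (sets borel)"
    unfolding winner_dist_def by (rule sets_measure_of) simp
  also have "\<dots> = sets borel" using sets.sigma_sets_eq[of borel] by simp
  finally show ?thesis .
qed

lemma wd_space: "space (winner_dist k F) = UNIV"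
  unfolding winner_dist_def by (rule space_measure_of) simp

lemma wd_prob:
  assumes pF: "prob_space F" and sF: "sets F = sets borel" and k: "0 < k"
  shows "prob_space (winner_dist k F)"
proof (rule prob_spaceI)
  have pP: "prob_space (PF k F)" by (rule prob_space_PiM) (use pF in auto)
  have "emeasure (winner_dist k F) (space (winner_dist k F)) = (\<integral>\<^sup>+pos. gA k UNIV pos \<partial>(PF k F))"
    unfolding wd_space by (rule wd_emeasure[OF sF]) simp
  also have "\<dots> = (\<integral>\<^sup>+pos. 1 \<partial>(PF k F))"
    unfolding gA_def using win_prob_sum[OF k] by simp
  also have "\<dots> = 1" using prob_space.emeasure_space_1[OF pP] by simp
  finally show "emeasure (winner_dist k F) (space (winner_dist k F)) = 1" .
qed


lemma refl_meas_F:
  assumes sF: "sets F = sets borel"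
  shows "(\<lambda>y::real. 1 - y) \<in> measurable F F"
proof -
  have "(\<lambda>y::real. 1 - y) \<in> measurable borel borel" by simp
  then show ?thesis using measurable_cong_sets[OF sF sF] by blast
qed

lemma refl_pos_meas:
  assumes sF: "sets F = sets borel"
  shows "refl_pos k \<in> measurable (PF k F) (PF k F)"
  unfolding refl_pos_def
proof (rule measurable_restrict)
  fix i assume i: "i \<in> {..<k}"
  have c: "(\<lambda>pos. pos i) \<in> measurable (PF k F) F" using i by (intro measurable_component_singleton) auto
  show "(\<lambda>pos. 1 - pos i) \<in> measurable (PF k F) F"
    using measurable_comp[OF c refl_meas_F[OF sF]] by (simp add: comp_def)
qed

lemma P_refl_inv:
  assumes pF: "prob_space F" and sF: "sets F = sets borel" and sym: "distr F borel (\<lambda>y. 1 - y) = F"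
  shows "distr (PF k F) (PF k F) (refl_pos k) = PF k F"
proof -
  have rc: "refl_pos k = compose {..<k} (\<lambda>y. 1 - y)"
    unfolding refl_pos_def compose_def by (rule ext) simp
  have d: "distr F F (\<lambda>y. 1 - y) = F"
  proof -
    have "distr F F (\<lambda>y. 1 - y) = distr F borel (\<lambda>y. 1 - y)" by (rule distr_cong) (auto simp: sF)
    then show ?thesis using sym by simp
  qed
  have "distr (PF k F) (PF k F) (compose {..<k} (\<lambda>y. 1 - y)) = PiM {..<k} (\<lambda>i. distr F F (\<lambda>y. 1 - y))"
    by (rule distr_PiM_finite_prob_space') (use pF refl_meas_F[OF sF] in auto)
  then show ?thesis unfolding rc d .
qed

lemma gA_refl:
  assumes pos: "pos \<in> space (PF k F)"
  shows "gA k A (refl_pos k pos) = gA k ((\<lambda>y. 1 - y) -` A) pos"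
proof -
  have w: "win_prob k (refl_pos k pos) i = win_prob k pos i" for i
  proof -
    have "win_prob k (refl_pos k pos) i = win_prob k (\<lambda>j. 1 - pos j) i"
      by (rule win_prob_cong) (simp add: refl_pos_def)
    then show ?thesis by (simp add: win_prob_refl)
  qed
  show ?thesis unfolding gA_def
    by (intro arg_cong[where f=ennreal] sum.cong refl) (simp only: w, simp add: refl_pos_def indicator_def)
qed

lemma int_refl:
  assumes pF: "prob_space F" and sF: "sets F = sets borel" and sym: "distr F borel (\<lambda>y. 1 - y) = F"
    and A: "A \<in> sets borel"
  shows "(\<integral>\<^sup>+pos. gA k A pos \<partial>(PF k F)) = (\<integral>\<^sup>+pos. gA k ((\<lambda>y. 1 - y) -` A) pos \<partial>(PF k F))"
proof -
  have "(\<integral>\<^sup>+pos. gA k A pos \<partial>(PF k F)) = (\<integral>\<^sup>+pos. gA k A pos \<partial>(distr (PF k F) (PF k F) (refl_pos k)))"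
    unfolding P_refl_inv[OF pF sF sym] ..
  also have "\<dots> = (\<integral>\<^sup>+pos. gA k A (refl_pos k pos) \<partial>(PF k F))"
  proof (rule nn_integral_distr[OF refl_pos_meas[OF sF]])
    show "gA k A \<in> borel_measurable (distr (PF k F) (PF k F) (refl_pos k))"
      unfolding P_refl_inv[OF pF sF sym] by (rule gA_meas[OF sF A])
  qed
  also have "\<dots> = (\<integral>\<^sup>+pos. gA k ((\<lambda>y. 1 - y) -` A) pos \<partial>(PF k F))"
    by (rule nn_integral_cong) (rule gA_refl)
  finally show ?thesis .
qed

lemma wd_sym:
  assumes pF: "prob_space F" and sF: "sets F = sets borel" and sym: "distr F borel (\<lambda>y. 1 - y) = F"
  shows "distr (winner_dist k F) borel (\<lambda>y. 1 - y) = winner_dist k F"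
proof (rule measure_eqI)
  show "sets (distr (winner_dist k F) borel (\<lambda>y. 1 - y)) = sets (winner_dist k F)"
    by (simp add: wd_sets)
  fix A assume "A \<in> sets (distr (winner_dist k F) borel (\<lambda>y. 1 - y))"
  then have A: "A \<in> sets borel" by simp
  have m: "(\<lambda>y::real. 1 - y) \<in> measurable (winner_dist k F) borel"
    by (subst measurable_cong_sets[OF wd_sets refl]) simp
  have "(\<lambda>y::real. 1 - y) -` A \<inter> space borel \<in> sets borel" by (rule measurable_sets[OF _ A]) simp
  then have A': "(\<lambda>y::real. 1 - y) -` A \<in> sets borel" by simp
  have "emeasure (distr (winner_dist k F) borel (\<lambda>y. 1 - y)) A = emeasure (winner_dist k F) ((\<lambda>y. 1 - y) -` A)"
    by (subst emeasure_distr[OF m A]) (simp add: wd_space)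
  also have "\<dots> = (\<integral>\<^sup>+pos. gA k ((\<lambda>y. 1 - y) -` A) pos \<partial>(PF k F))" by (rule wd_emeasure[OF sF A'])
  also have "\<dots> = (\<integral>\<^sup>+pos. gA k A pos \<partial>(PF k F))" by (rule int_refl[OF pF sF sym A, symmetric])
  also have "\<dots> = emeasure (winner_dist k F) A" by (rule wd_emeasure[OF sF A, symmetric])
  finally show "emeasure (distr (winner_dist k F) borel (\<lambda>y. 1 - y)) A = emeasure (winner_dist k F) A" .
qed

lemma sym_atoms:
  fixes G :: "real measure"
  assumes sG: "sets G = sets borel" and sym: "distr G borel (\<lambda>y. 1 - y) = G"
  shows "measure G {1 - x} = measure G {x}"
proof -
  have m: "(\<lambda>y::real. 1 - y) \<in> measurable G borel"
    by (subst measurable_cong_sets[OF sG refl]) simp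
  have "measure G {1 - x} = measure (distr G borel (\<lambda>y. 1 - y)) {1 - x}" using sym by simp
  also have "\<dots> = measure G ((\<lambda>y. 1 - y) -` {1 - x} \<inter> space G)" by (rule measure_distr[OF m]) simp
  also have "(\<lambda>y::real. 1 - y) -` {1 - x} \<inter> space G = {x}" using sets_eq_imp_space_eq[OF sG] by auto
  finally show ?thesis .
qed


lemma lp_nonneg: "0 \<le> p \<Longrightarrow> 0 \<le> left_part k pos p"
proof -
  assume p: "0 \<le> p"
  define L where "L = {q \<in> occupied k pos. q < p}"
  have fin: "finite L" unfolding L_def occupied_def by simp
  show ?thesis
  proof (cases "L = {}")
    case True then show ?thesis using p unfolding left_part_def Let_def L_def[symmetric] by simp
  next
    case False
    have "Max L \<in> L" using Max_in[OF fin False] .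
    then have "Max L < p" unfolding L_def by simp
    then show ?thesis using False unfolding left_part_def Let_def L_def[symmetric] by simp
  qed
qed

lemma rp_nonneg: "p \<le> 1 \<Longrightarrow> 0 \<le> right_part k pos p"
proof -
  assume p: "p \<le> 1"
  define L where "L = {q \<in> occupied k pos. p < q}"
  have fin: "finite L" unfolding L_def occupied_def by simp
  show ?thesis
  proof (cases "L = {}")
    case True then show ?thesis using p unfolding right_part_def Let_def L_def[symmetric] by simp
  next
    case False
    have "Min L \<in> L" using Min_in[OF fin False] .
    then have "p < Min L" unfolding L_def by simp
    then show ?thesis using False unfolding right_part_def Let_def L_def[symmetric] by simp
  qed
qed

lemma B_case:
  fixes pos :: "nat \<Rightarrow> real"
  assumes x: "1/4 < x" "x < 1/2" and j: "j<k" "pos j \<noteq> x" "pos j \<noteq> 1-x"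
    and others: "\<forall>i<k. i \<noteq> j \<longrightarrow> pos i = x \<or> pos i = 1-x"
    and a: "a<k" "pos a = x" and b: "b<k" "pos b = 1-x"
    and s: "\<sigma> \<in> tb_choices k pos"
  shows "j \<notin> winners k pos \<sigma>"
proof -
  define y where "y = pos j"
  have occ: "occupied k pos = {x, 1-x, y}"
  proof (intro equalityI subsetI)
    fix q assume "q \<in> occupied k pos"
    then obtain i where "i < k" "q = pos i" unfolding occupied_def by blast
    then show "q \<in> {x, 1-x, y}" using others y_def by (cases "i = j") auto
  next
    fix q assume "q \<in> {x, 1-x, y}"
    have "pos a \<in> occupied k pos" "pos b \<in> occupied k pos" "pos j \<in> occupied k pos"
      using a(1) b(1) j(1) unfolding occupied_def by auto
    then show "q \<in> occupied k pos" using \<open>q \<in> {x, 1-x, y}\<close> a b y_def by auto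
  qed
  have sm: "\<sigma> q \<in> tb_pairs k pos q" if "q \<in> occupied k pos" for q
    using PiE_mem[OF s[unfolded tb_choices_def] that] .
  have occ_mem: "pos i \<in> occupied k pos" if "i < k" for i using that unfolding occupied_def by blast
  obtain c d where cd: "\<sigma> y = (c,d)" by fastforce
  have "(c,d) \<in> tb_pairs k pos (pos j)" using sm[OF occ_mem[OF j(1)]] cd y_def by simp
  then have cd': "c < k" "d < k" "pos c = y" "pos d = y" unfolding tbp_iff[OF j(1)] y_def by auto
  have "c = j" using cd' others j y_def by (metis)
  moreover have "d = j" using cd' others j y_def by (metis)
  ultimately have shj: "share k pos \<sigma> j = left_part k pos y + right_part k pos y"
    unfolding share_def y_def[symmetric] using cd by simp
  have x1: "x < 1 - x" using x by simp
  have sh_ge_r: "right_part k pos (pos r) \<le> share k pos \<sigma> r" if "snd (\<sigma> (pos r)) = r" "0 \<le> pos r" for r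
    unfolding share_def using that lp_nonneg[of "pos r" k pos] by simp
  have sh_ge_l: "left_part k pos (pos r) \<le> share k pos \<sigma> r" if "fst (\<sigma> (pos r)) = r" "pos r \<le> 1" for r
    unfolding share_def using that rp_nonneg[of "pos r" k pos] by simp
  \<comment> \<open>witness with share at least x and share of j below x\<close>
  have "\<exists>r<k. x \<le> share k pos \<sigma> r" and "share k pos \<sigma> j < x"
  proof -
    have yx: "y \<noteq> x" "y \<noteq> 1 - x" using j y_def by auto
    consider (lo) "y < x" | (mid) "x < y" "y < 1 - x" | (hi) "1 - x < y" using yx by linarith
    then have "(\<exists>r<k. x \<le> share k pos \<sigma> r) \<and> share k pos \<sigma> j < x"
    proof cases
      case lo
      have L1: "{q \<in> occupied k pos. q < y} = {}" using lo x1 unfolding occ by auto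
      have R1: "{q \<in> occupied k pos. y < q} = {x, 1-x}" using lo x1 unfolding occ by auto
      have R2: "{q \<in> occupied k pos. 1 - x < q} = {}" using lo x1 unfolding occ by auto
      have "left_part k pos y = y" unfolding left_part_def Let_def L1 by simp
      moreover have "right_part k pos y = (x - y) / 2"
        unfolding right_part_def Let_def R1 using x1 by (simp add: min_def)
      ultimately have sj: "share k pos \<sigma> j < x" using shj lo by simp
      obtain r r' where rr: "\<sigma> (1-x) = (r', r)" by fastforce
      have "(r',r) \<in> tb_pairs k pos (pos b)" using sm[OF occ_mem[OF b(1)]] rr b by simp
      then have r: "r < k" "pos r = 1 - x" unfolding tbp_iff[OF b(1)] using b by auto
      have "right_part k pos (pos r) = x" unfolding r(2) right_part_def Let_def R2 by simp
      moreover have "right_part k pos (pos r) \<le> share k pos \<sigma> r" using rr r x by (intro sh_ge_r) auto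
      ultimately show ?thesis using sj r by auto
    next
      case mid
      have L1: "{q \<in> occupied k pos. q < y} = {x}" using mid x1 unfolding occ by auto
      have R1: "{q \<in> occupied k pos. y < q} = {1-x}" using mid x1 unfolding occ by auto
      have R2: "{q \<in> occupied k pos. 1 - x < q} = {}" using mid x1 unfolding occ by auto
      have "left_part k pos y = (y - x) / 2" unfolding left_part_def Let_def L1 by simp
      moreover have "right_part k pos y = (1 - x - y) / 2"
        unfolding right_part_def Let_def R1 by simp
      ultimately have sj: "share k pos \<sigma> j < x" using shj x by simp
      obtain r r' where rr: "\<sigma> (1-x) = (r', r)" by fastforce
      have "(r',r) \<in> tb_pairs k pos (pos b)" using sm[OF occ_mem[OF b(1)]] rr b by simp
      then have r: "r < k" "pos r = 1 - x" unfolding tbp_iff[OF b(1)] using b by auto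
      have "right_part k pos (pos r) = x" unfolding r(2) right_part_def Let_def R2 by simp
      moreover have "right_part k pos (pos r) \<le> share k pos \<sigma> r" using rr r x by (intro sh_ge_r) auto
      ultimately show ?thesis using sj r by auto
    next
      case hi
      have L1: "{q \<in> occupied k pos. q < y} = {x, 1-x}" using hi x1 unfolding occ by auto
      have R1: "{q \<in> occupied k pos. y < q} = {}" using hi x1 unfolding occ by auto
      have L2: "{q \<in> occupied k pos. q < x} = {}" using hi x1 unfolding occ by auto
      have "left_part k pos y = (y - (1 - x)) / 2" unfolding left_part_def Let_def L1 using x1 by (simp add: max_def)
      moreover have "right_part k pos y = 1 - y"
        unfolding right_part_def Let_def R1 by simp
      ultimately have sj: "share k pos \<sigma> j < x" using shj hi by simp
      obtain r r' where rr: "\<sigma> x = (r, r')" by fastforce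
      have "(r,r') \<in> tb_pairs k pos (pos a)" using sm[OF occ_mem[OF a(1)]] rr a by simp
      then have r: "r < k" "pos r = x" unfolding tbp_iff[OF a(1)] using a by auto
      have "left_part k pos (pos r) = x" unfolding r(2) left_part_def Let_def L2 by simp
      moreover have "left_part k pos (pos r) \<le> share k pos \<sigma> r" using rr r x by (intro sh_ge_l) auto
      ultimately show ?thesis using sj r by auto
    qed
    then show "\<exists>r<k. x \<le> share k pos \<sigma> r" "share k pos \<sigma> j < x" by auto
  qed
  then show ?thesis unfolding winners_def by force
qed


definition Box :: "nat \<Rightarrow> nat \<Rightarrow> real set \<Rightarrow> real set \<Rightarrow> (nat \<Rightarrow> real) set" where
  "Box k j C D = PiE {..<k} (\<lambda>i. if i = j then C else D)"

definition Aev :: "nat \<Rightarrow> real \<Rightarrow> (nat \<Rightarrow> real) set" where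
  "Aev k x = PiE {..<k} (\<lambda>_. {x, 1-x})"

definition Eev :: "nat \<Rightarrow> real \<Rightarrow> nat \<Rightarrow> (nat \<Rightarrow> real) set" where
  "Eev k x j = Box k j (- {x, 1-x}) {x, 1-x} - (Box k j (- {x, 1-x}) {x} \<union> Box k j (- {x, 1-x}) {1-x})"

lemma wp_zero:
  fixes pos :: "nat \<Rightarrow> real"
  assumes x: "1/4 < x" "x < 1/2" and j: "j<k" "pos j \<noteq> x" "pos j \<noteq> 1-x"
    and others: "\<forall>i<k. i \<noteq> j \<longrightarrow> pos i = x \<or> pos i = 1-x"
    and a: "a<k" "pos a = x" and b: "b<k" "pos b = 1-x"
  shows "win_prob k pos j = 0"
proof -
  have "j \<notin> winners k pos \<sigma>" if "\<sigma> \<in> tb_choices k pos" for \<sigma>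
    by (rule B_case[OF x j others a b that])
  then show ?thesis unfolding win_prob_def by simp
qed

lemma Eev_props:
  assumes "pos \<in> Eev k x j" and j: "j < k"
  shows "pos j \<noteq> x" "pos j \<noteq> 1 - x" "\<forall>i<k. i \<noteq> j \<longrightarrow> pos i = x \<or> pos i = 1-x"
    "\<exists>a<k. pos a = x" "\<exists>b<k. pos b = 1 - x"
proof -
  have m: "pos \<in> Box k j (- {x, 1-x}) {x, 1-x}" and n1: "pos \<notin> Box k j (- {x, 1-x}) {x}"
    and n2: "pos \<notin> Box k j (- {x, 1-x}) {1-x}" using assms(1) unfolding Eev_def by auto
  have pj: "pos j \<notin> {x, 1-x}" using PiE_mem[OF m[unfolded Box_def], of j] j by simp
  then show "pos j \<noteq> x" "pos j \<noteq> 1 - x" by auto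
  have oth: "pos i \<in> {x, 1-x}" if "i < k" "i \<noteq> j" for i using PiE_mem[OF m[unfolded Box_def], of i] that by simp
  then show "\<forall>i<k. i \<noteq> j \<longrightarrow> pos i = x \<or> pos i = 1-x" by auto
  have ext: "pos \<in> extensional {..<k}" using m unfolding Box_def PiE_def by auto
  from n1 obtain i where i: "i < k" "pos i \<notin> (if i = j then - {x, 1-x} else {x})"
    using ext unfolding Box_def PiE_def Pi_def by auto
  then have "i \<noteq> j" using pj by auto
  then show "\<exists>b<k. pos b = 1 - x" using i oth[OF i(1)] by auto
  from n2 obtain i' where i': "i' < k" "pos i' \<notin> (if i' = j then - {x, 1-x} else {1-x})"
    using ext unfolding Box_def PiE_def Pi_def by auto
  then have "i' \<noteq> j" using pj by auto
  then show "\<exists>a<k. pos a = x" using i' oth[OF i'(1)] by auto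
qed

lemma gA_one:
  assumes x: "1/4 < x" "x < 1/2" and k: "0 < k"
    and ev: "pos \<in> Aev k x \<or> (\<exists>j<k. pos \<in> Eev k x j)"
  shows "gA k {x, 1-x} pos = 1"
proof -
  have t: "win_prob k pos i * indicator {x, 1-x} (pos i) = win_prob k pos i" if i: "i < k" for i
  proof (cases "pos i \<in> {x, 1-x}")
    case True then show ?thesis by simp
  next
    case False
    then have nA: "pos \<notin> Aev k x" using i unfolding Aev_def by (auto simp: PiE_iff)
    then obtain j where j: "j < k" "pos \<in> Eev k x j" using ev by auto
    note E = Eev_props[OF j(2) j(1)]
    have "i = j" using E(3) False i by auto
    moreover obtain a b where "a<k" "pos a = x" "b<k" "pos b = 1-x" using E(4,5) by auto
    ultimately have "win_prob k pos i = 0" using wp_zero[OF x j(1) E(1,2,3)] by simp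
    then show ?thesis by simp
  qed
  have "(\<Sum>i<k. win_prob k pos i * indicator {x, 1-x} (pos i)) = (\<Sum>i<k. win_prob k pos i)"
    by (rule sum.cong) (auto simp: t)
  then show ?thesis unfolding gA_def using win_prob_sum[OF k] by simp
qed

lemma ind_bound:
  assumes x: "1/4 < x" "x < 1/2" and k: "0 < k"
  shows "indicator (Aev k x) pos + (\<Sum>j<k. indicator (Eev k x j) pos) \<le> gA k {x, 1-x} pos"
proof -
  have disjAE: "pos \<notin> Eev k x j" if "pos \<in> Aev k x" "j < k" for j
    using that Eev_props(1,2)[of pos k x j] unfolding Aev_def by (auto simp: PiE_iff)
  have disjEE: "pos \<notin> Eev k x j'" if "pos \<in> Eev k x j" "j < k" "j' < k" "j' \<noteq> j" for j j'
    using that Eev_props(1,2,3)[of pos k x j] Eev_props(1,2)[of pos k x j'] by metis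
  show ?thesis
  proof (cases "pos \<in> Aev k x")
    case True
    have "(\<Sum>j<k. indicator (Eev k x j) pos :: ennreal) = 0"
      using disjAE[OF True] by (intro sum.neutral) auto
    then show ?thesis using gA_one[OF x k] True by simp
  next
    case nA: False
    show ?thesis
    proof (cases "\<exists>j<k. pos \<in> Eev k x j")
      case True
      then obtain j where j: "j < k" "pos \<in> Eev k x j" by auto
      have "(\<Sum>j'<k. indicator (Eev k x j') pos :: ennreal) = (\<Sum>j'<k. if j' = j then 1 else 0)"
        using disjEE[OF j(2) j(1)] j by (intro sum.cong) auto
      also have "\<dots> = 1" using j(1) by simp
      finally show ?thesis using gA_one[OF x k] True nA by simp
    next
      case False
      then have "(\<Sum>j<k. indicator (Eev k x j) pos :: ennreal) = 0" by (intro sum.neutral) auto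
      then show ?thesis using nA by simp
    qed
  qed
qed


lemma prod_if_j:
  fixes c d :: "'a::comm_monoid_mult"
  assumes "j < k"
  shows "(\<Prod>i<k. if i = j then c else d) = c * d ^ (k - 1)"
proof -
  have "(\<Prod>i<k. if i = j then c else d) = (if j = j then c else d) * (\<Prod>i\<in>{..<k} - {j}. if i = j then c else d)"
    using assms by (subst prod.remove[of _ j]) auto
  also have "(\<Prod>i\<in>{..<k} - {j}. if i = j then c else d) = (\<Prod>i\<in>{..<k} - {j}. d)"
    by (rule prod.cong) auto
  also have "\<dots> = d ^ (k - 1)" using assms by simp
  finally show ?thesis by simp
qed

lemma step_bound:
  assumes pF: "prob_space F" and sF: "sets F = sets borel"
    and Fx: "measure F {x} = p" and F1x: "measure F {1 - x} = p"
    and x: "1/4 < x" "x < 1/2" and k: "2 \<le> k"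
  shows "ennreal (2 * fp_map k p) \<le> emeasure (winner_dist k F) {x, 1 - x}"
proof -
  interpret F: prob_space F by fact
  interpret PS: product_sigma_finite "\<lambda>_. F"
    by unfold_locales
  let ?P = "PF k F"
  let ?S = "{x, 1 - x}"
  interpret PP: prob_space ?P by (rule prob_space_PiM) (use pF in auto)
  have k0: "0 < k" using k by simp
  have spF: "space F = UNIV" using sets_eq_imp_space_eq[OF sF] by simp
  have x1: "x \<noteq> 1 - x" using x by simp
  have Sb: "?S \<in> sets F" "{x} \<in> sets F" "{1-x} \<in> sets F" "- ?S \<in> sets F"
  proof -
    show "?S \<in> sets F" "{x} \<in> sets F" "{1-x} \<in> sets F" unfolding sF by (auto intro: borel_closed)
    have "space F - ?S \<in> sets F" using \<open>?S \<in> sets F\<close> by auto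
    then show "- ?S \<in> sets F" using spF by (simp add: Compl_eq_Diff_UNIV)
  qed
  have p0: "0 \<le> p" using Fx by auto
  have mS: "measure F ?S = 2 * p"
  proof -
    have "measure F ({x} \<union> {1-x}) = measure F {x} + measure F {1-x}"
      using Sb x1 by (intro F.finite_measure_Union) auto
    moreover have "{x} \<union> {1-x} = ?S" by auto
    ultimately show ?thesis using Fx F1x by simp
  qed
  have mC: "measure F (- ?S) = 1 - 2 * p"
    using F.prob_compl[OF Sb(1)] mS spF by (simp add: Compl_eq_Diff_UNIV)
  have q0: "0 \<le> 1 - 2 * p" using mC[symmetric] by simp
  have eS: "emeasure F ?S = ennreal (2*p)" "emeasure F {x} = ennreal p" "emeasure F {1-x} = ennreal p"
       "emeasure F (- ?S) = ennreal (1 - 2*p)"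
    using F.emeasure_eq_measure mS Fx F1x mC by auto
  have box: "emeasure ?P (Box k j C D) = emeasure F C * emeasure F D ^ (k - 1)"
    if "j < k" "C \<in> sets F" "D \<in> sets F" for j C D
  proof -
    have "emeasure ?P (Box k j C D) = (\<Prod>i<k. emeasure F (if i = j then C else D))"
      unfolding Box_def using that by (subst PS.emeasure_PiM) auto
    also have "\<dots> = (\<Prod>i<k. if i = j then emeasure F C else emeasure F D)"
      by (rule prod.cong) auto
    also have "\<dots> = emeasure F C * emeasure F D ^ (k - 1)" by (rule prod_if_j[OF that(1)])
    finally show ?thesis .
  qed
  have boxs: "Box k j C D \<in> sets ?P" if "C \<in> sets F" "D \<in> sets F" for j C D
    unfolding Box_def using that by (intro sets_PiM_I_finite) auto
  have eA: "emeasure ?P (Aev k x) = ennreal ((2*p)^k)"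
  proof -
    have "emeasure ?P (Aev k x) = (\<Prod>i<k. emeasure F ?S)"
      unfolding Aev_def using Sb by (subst PS.emeasure_PiM) auto
    also have "\<dots> = ennreal (2*p) ^ k" using eS by simp
    also have "\<dots> = ennreal ((2*p)^k)" using p0 by (simp add: ennreal_power)
    finally show ?thesis .
  qed
  have sA: "Aev k x \<in> sets ?P" unfolding Aev_def using Sb by (intro sets_PiM_I_finite) auto
  define v where "v = (1 - 2*p) * (2*p)^(k-1) - 2 * ((1 - 2*p) * p^(k-1))"
  have eE: "emeasure ?P (Eev k x j) = ennreal v" if j: "j < k" for j
  proof -
    have fin: "emeasure ?P (Box k j (- ?S) {x} \<union> Box k j (- ?S) {1-x}) \<noteq> \<infinity>"
      using PP.emeasure_finite by (simp add: top_unique)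
    have disj: "Box k j (- ?S) {x} \<inter> Box k j (- ?S) {1-x} = {}"
    proof -
      define i where "i = (if j = 0 then 1 else (0::nat))"
      have i: "i < k" "i \<noteq> j" using k j unfolding i_def by auto
      show ?thesis
      proof (rule ccontr)
        assume "Box k j (- ?S) {x} \<inter> Box k j (- ?S) {1-x} \<noteq> {}"
        then obtain pos where m1: "pos \<in> Box k j (- ?S) {x}" and m2: "pos \<in> Box k j (- ?S) {1-x}" by blast
        have "pos i \<in> (if i = j then - ?S else {x})" using PiE_mem[OF m1[unfolded Box_def], of i] i by simp
        moreover have "pos i \<in> (if i = j then - ?S else {1-x})" using PiE_mem[OF m2[unfolded Box_def], of i] i by simp
        ultimately have "pos i = x" "pos i = 1 - x" using i by auto
        then show False using x1 by simp
      qed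
    qed
    have sub: "Box k j (- ?S) {x} \<union> Box k j (- ?S) {1-x} \<subseteq> Box k j (- ?S) ?S"
      unfolding Box_def by (intro Un_least PiE_mono) auto
    have "emeasure ?P (Eev k x j) = emeasure ?P (Box k j (- ?S) ?S) -
        emeasure ?P (Box k j (- ?S) {x} \<union> Box k j (- ?S) {1-x})"
      unfolding Eev_def using fin sub boxs[OF Sb(4) Sb(1)] boxs[OF Sb(4) Sb(2)] boxs[OF Sb(4) Sb(3)]
      by (intro emeasure_Diff) auto
    also have "emeasure ?P (Box k j (- ?S) {x} \<union> Box k j (- ?S) {1-x}) =
        emeasure ?P (Box k j (- ?S) {x}) + emeasure ?P (Box k j (- ?S) {1-x})"
      using disj boxs[OF Sb(4) Sb(2)] boxs[OF Sb(4) Sb(3)] by (intro plus_emeasure[symmetric])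
    also have "emeasure ?P (Box k j (- ?S) {x}) = ennreal (1 - 2*p) * ennreal p ^ (k - 1)"
      using box[OF j Sb(4) Sb(2)] eS by simp
    also have "emeasure ?P (Box k j (- ?S) {1-x}) = ennreal (1 - 2*p) * ennreal p ^ (k - 1)"
      using box[OF j Sb(4) Sb(3)] eS by simp
    also have "emeasure ?P (Box k j (- ?S) ?S) = ennreal (1 - 2*p) * ennreal (2*p) ^ (k - 1)"
      using box[OF j Sb(4) Sb(1)] eS by simp
    also have "ennreal (1 - 2*p) * ennreal p ^ (k - 1) = ennreal ((1 - 2*p) * p ^ (k - 1))"
      by (simp only: ennreal_power[OF p0] ennreal_mult[OF q0 zero_le_power[OF p0]])
    also have "ennreal (1 - 2*p) * ennreal (2*p) ^ (k - 1) = ennreal ((1 - 2*p) * (2*p) ^ (k - 1))"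
    proof -
      have "0 \<le> 2*p" using p0 by simp
      then show ?thesis by (simp only: ennreal_power ennreal_mult[OF q0 zero_le_power])
    qed
    also have "ennreal ((1 - 2*p) * p ^ (k - 1)) + ennreal ((1 - 2*p) * p ^ (k - 1)) =
        ennreal (2 * ((1 - 2*p) * p ^ (k - 1)))"
    proof -
      have c0: "0 \<le> (1 - 2*p) * p ^ (k - 1)" using p0 q0 by simp
      show ?thesis using c0 by (simp only: mult_2 ennreal_plus)
    qed
    also have "ennreal ((1 - 2*p) * (2*p) ^ (k - 1)) - ennreal (2 * ((1 - 2*p) * p ^ (k - 1))) = ennreal v"
    proof -
      have c0: "0 \<le> 2 * ((1 - 2*p) * p ^ (k - 1))" using p0 q0 by simp
      show ?thesis unfolding v_def by (rule ennreal_minus[OF c0])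
    qed
    finally show ?thesis .
  qed
  have sE: "Eev k x j \<in> sets ?P" for j unfolding Eev_def using boxs Sb by auto
  have alg: "\<And>C A B r::real. 2 * (C/2 + r*(1-2*p)*(A - 2*B)/2) = C + r*((1-2*p)*A - 2*((1-2*p)*B))"
    by (simp add: field_simps)
  have "ennreal (2 * fp_map k p) = ennreal ((2*p)^k + real k * v)"
    unfolding fp_map_def v_def alg ..
  also have "\<dots> \<le> ennreal ((2*p)^k) + of_nat k * ennreal v"
  proof (cases "0 \<le> v")
    case True
    have "of_nat k * ennreal v = ennreal (real k) * ennreal v" by (simp only: ennreal_of_nat_eq_real_of_nat)
    also have "\<dots> = ennreal (real k * v)" by (rule ennreal_mult[symmetric]) (use True in auto)
    finally have e1: "of_nat k * ennreal v = ennreal (real k * v)" .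
    have "ennreal ((2*p)^k + real k * v) = ennreal ((2*p)^k) + ennreal (real k * v)"
      by (rule ennreal_plus) (use p0 True in auto)
    then show ?thesis using e1 by simp
  next
    case False
    then have "(2*p)^k + real k * v \<le> (2*p)^k" by (simp add: mult_nonneg_nonpos)
    then have "ennreal ((2*p)^k + real k * v) \<le> ennreal ((2*p)^k)" by (rule ennreal_leI)
    then show ?thesis by (rule order_trans) simp
  qed
  also have "\<dots> = emeasure ?P (Aev k x) + (\<Sum>j<k. emeasure ?P (Eev k x j))"
    using eA eE by simp
  also have "\<dots> = (\<integral>\<^sup>+pos. indicator (Aev k x) pos + (\<Sum>j<k. indicator (Eev k x j) pos) \<partial>?P)"
    using sA sE by (simp add: nn_integral_add nn_integral_sum)
  also have "\<dots> \<le> (\<integral>\<^sup>+pos. gA k ?S pos \<partial>?P)"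
    by (rule nn_integral_mono) (rule ind_bound[OF x k0])
  also have "\<dots> = emeasure (winner_dist k F) ?S"
    using Sb(1) sF by (intro wd_emeasure[symmetric]) auto
  finally show ?thesis .
qed


lemma step:
  assumes pF: "prob_space F" and sF: "sets F = sets borel" and sym: "distr F borel (\<lambda>y. 1 - y) = F"
    and x: "1/4 < x" "x < 1/2" and k: "2 \<le> k"
  shows "prob_space (winner_dist k F) \<and> sets (winner_dist k F) = sets borel \<and>
    distr (winner_dist k F) borel (\<lambda>y. 1 - y) = winner_dist k F \<and>
    fp_map k (measure F {x}) \<le> measure (winner_dist k F) {x}"
proof -
  let ?G = "winner_dist k F"
  have pG: "prob_space ?G" using wd_prob[OF pF sF] k by simp
  interpret G: prob_space ?G by fact
  have sG: "sets ?G = sets borel" by (rule wd_sets)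
  have symG: "distr ?G borel (\<lambda>y. 1 - y) = ?G" by (rule wd_sym[OF pF sF sym])
  have F1: "measure F {1 - x} = measure F {x}" by (rule sym_atoms[OF sF sym])
  have G1: "measure ?G {1 - x} = measure ?G {x}" by (rule sym_atoms[OF sG symG])
  have b: "ennreal (2 * fp_map k (measure F {x})) \<le> emeasure ?G {x, 1 - x}"
    by (rule step_bound[OF pF sF refl F1 x k])
  have x1: "x \<noteq> 1 - x" using x by simp
  have "measure ?G ({x} \<union> {1 - x}) = measure ?G {x} + measure ?G {1 - x}"
    using x1 sG by (intro G.finite_measure_Union) auto
  moreover have "{x} \<union> {1 - x} = {x, 1 - x}" by auto
  ultimately have mS: "measure ?G {x, 1 - x} = 2 * measure ?G {x}" using G1 by simp
  have "ennreal (2 * fp_map k (measure F {x})) \<le> ennreal (2 * measure ?G {x})"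
    using b G.emeasure_eq_measure mS by simp
  then have "2 * fp_map k (measure F {x}) \<le> 2 * measure ?G {x}"
    by (subst (asm) ennreal_le_iff) auto
  then show ?thesis using pG sG symG by simp
qed

lemma fp_map_isCont: "isCont (fp_map k) L"
  unfolding fp_map_def by (intro continuous_intros) auto

theorem mainTheorem20:
  fixes k :: nat
  assumes "k \<ge> 5"
  shows "\<exists>pstar::real. pstar < 1/2 \<and> fp_map k pstar = pstar \<and>
    (\<forall>x F0 p. 1/4 < x \<and> x < 1/2 \<longrightarrow>
       prob_space F0 \<longrightarrow> sets F0 = sets borel \<longrightarrow> measure F0 {0..1} = 1 \<longrightarrow>
       distr F0 borel (\<lambda>y. 1 - y) = F0 \<longrightarrow>
       measure F0 {x} = p \<longrightarrow> measure F0 {1 - x} = p \<longrightarrow> p > pstar \<longrightarrow>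
       ((\<lambda>t. measure (replicator k F0 t) {x}) \<longlonglongrightarrow> 1/2) \<and>
       ((\<lambda>t. measure (replicator k F0 t) {1 - x}) \<longlonglongrightarrow> 1/2))"
proof -
  obtain pstar where ps: "0 \<le> pstar" "pstar < 1/2" "fp_map k pstar = pstar"
    "\<And>p. pstar < p \<Longrightarrow> p < 1/2 \<Longrightarrow> p < fp_map k p"
    using fp_exists[OF assms] by blast
  have k2: "2 \<le> k" using assms by simp
  show ?thesis
  proof (intro exI[of _ pstar] conjI ps(2) ps(3) allI impI)
    fix x :: real and F0 :: "real measure" and p :: real
    assume x: "1/4 < x \<and> x < 1/2" and pF0: "prob_space F0" and sF0: "sets F0 = sets borel"
      and "measure F0 {0..1} = 1" and sym0: "distr F0 borel (\<lambda>y. 1 - y) = F0"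
      and F0x: "measure F0 {x} = p" and "measure F0 {1 - x} = p" and pgt: "p > pstar"
    define Ft where "Ft t = replicator k F0 t" for t
    have Ft_Suc: "Ft (Suc t) = winner_dist k (Ft t)" for t
      unfolding Ft_def replicator_def by simp
    have inv: "prob_space (Ft t) \<and> sets (Ft t) = sets borel \<and> distr (Ft t) borel (\<lambda>y. 1 - y) = Ft t" for t
    proof (induction t)
      case 0 then show ?case using pF0 sF0 sym0 unfolding Ft_def replicator_def by simp
    next
      case (Suc t) then show ?case unfolding Ft_Suc using step[of "Ft t" x k] x k2 by blast
    qed
    define q where "q t = measure (Ft t) {x}" for t
    have q1: "measure (Ft t) {1 - x} = q t" for t unfolding q_def using inv[of t] by (intro sym_atoms) auto
    have qstep: "fp_map k (q t) \<le> q (Suc t)" for t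
      unfolding q_def Ft_Suc using step[of "Ft t" x k] inv[of t] x k2 by blast
    have qle: "q t \<le> 1/2" for t
    proof -
      interpret P: prob_space "Ft t" using inv[of t] by blast
      have x1: "x \<noteq> 1 - x" using x by simp
      have "measure (Ft t) ({x} \<union> {1 - x}) = measure (Ft t) {x} + measure (Ft t) {1 - x}"
        using x1 inv[of t] by (intro P.finite_measure_Union) auto
      moreover have "measure (Ft t) ({x} \<union> {1 - x}) \<le> 1" by (rule P.prob_le_1)
      ultimately show ?thesis using q1[of t] unfolding q_def by simp
    qed
    have q0: "q 0 = p" unfolding q_def Ft_def replicator_def using F0x by simp
    have mono_gt: "q t \<le> q (Suc t) \<and> pstar < q t" for t
    proof (induction t)
      case 0
      have "q 0 \<le> fp_map k (q 0)"
      proof (cases "q 0 < 1/2")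
        case True then show ?thesis using ps(4)[of "q 0"] q0 pgt by simp
      next
        case False then have h: "q 0 = 1/2" using qle[of 0] by simp
        show ?thesis unfolding h fp_map_half by simp
      qed
      then show ?case using qstep[of 0] q0 pgt by simp
    next
      case (Suc t)
      then have gt: "pstar < q (Suc t)" by simp
      have "q (Suc t) \<le> fp_map k (q (Suc t))"
      proof (cases "q (Suc t) < 1/2")
        case True then show ?thesis using ps(4)[of "q (Suc t)"] gt by simp
      next
        case False then have h: "q (Suc t) = 1/2" using qle[of "Suc t"] by simp
        show ?thesis unfolding h fp_map_half by simp
      qed
      then show ?case using qstep[of "Suc t"] gt by simp
    qed
    have inc: "incseq q" using mono_gt by (intro incseq_SucI) simp
    obtain L where L: "q \<longlonglongrightarrow> L" "\<forall>i. q i \<le> L"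
      using incseq_convergent[OF inc, of "1/2"] qle by blast
    have Lle: "L \<le> 1/2" using LIMSEQ_le_const2[OF L(1)] qle by blast
    have Lgt: "pstar < L" using mono_gt[of 0] L(2)[rule_format, of 0] by simp
    have "fp_map k L \<le> L"
    proof (rule LIMSEQ_le)
      show "(\<lambda>t. fp_map k (q t)) \<longlonglongrightarrow> fp_map k L" by (rule isCont_tendsto_compose[OF fp_map_isCont L(1)])
      show "(\<lambda>t. q (Suc t)) \<longlonglongrightarrow> L" by (rule LIMSEQ_Suc[OF L(1)])
      show "\<exists>N. \<forall>n\<ge>N. fp_map k (q n) \<le> q (Suc n)" using qstep by blast
    qed
    then have hL: "L = 1/2" using ps(4)[of L] Lgt Lle by force
    have lim: "q \<longlonglongrightarrow> 1/2" using L(1) unfolding hL .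
    show "(\<lambda>t. measure (replicator k F0 t) {x}) \<longlonglongrightarrow> 1/2"
      using lim unfolding q_def Ft_def .
    show "(\<lambda>t. measure (replicator k F0 t) {1 - x}) \<longlonglongrightarrow> 1/2"
      using lim q1 unfolding q_def Ft_def by simp
  qed
qed


end
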